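(* Let $\mathcal{M}$ be a family of probability measures on $\mathbb{R}$ satisfying: $\inf_{p\in\mathcal{M}}\mu_p>0$; $\sup_{p\in\mathcal{M}}E_p[e^{\tau|X|}]<\infty$ for some $\tau>0$; each $p\in\mathcal{M}$ equals $(1-\lambda_p)\Phi_p+\lambda_p\Psi_p$ with $0\le\lambda_p<1$, $\Phi_p,\Psi_p$ probability measures, $\Phi_p$ having a density $\phi_p$; $\sup_p\lambda_p<1$; and there is $T\in(0,\infty)$ with $\phi_p\in C_0^2((-T,T))$ for all $p$ and $\sup_p\int_{-T}^T|\phi_p''|<\infty$. Then there exists $\eta>0$ such that for all $p\in\mathcal{M}$, $\hat p(z):=E_p[e^{izX}]$ is analytic on $D_\eta=\{z\in\mathbb{C}:|\Im(z)|\le\eta\}$ and $\hat p(z)\ne1$ for $z\in D_\eta\setminus\{0\}$. Furthermore, $$L_\eta:=\sup_{z\in D_\eta\setminus\{0\},\,p\in\mathcal{M}}|K_p(z)|<\infty,\qquad K_p(z):=\frac{1}{1-\hat p(z)}-\frac{1}{-i\mu_pz}.$$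
   Context: For a probability measure $p$ on $\mathbb{R}$, $\mu_p$ denotes its mean and $E_p$ expectation when $X\sim p$. $C_0^2((-T,T))$ denotes $C^2$ functions with compact support in $(-T,T)$. *)

theory Defs
  imports "HOL-Probability.Probability"
begin

definition mean :: "real measure \<Rightarrow> real" where
  "mean p = (\<integral>x. x \<partial>p)"

definition cfz :: "real measure \<Rightarrow> complex \<Rightarrow> complex" where
  "cfz p z = (\<integral>x. exp (\<i> * z * complex_of_real x) \<partial>p)"

definition strip :: "real \<Rightarrow> complex set" where
  "strip \<eta> = {z. \<bar>Im z\<bar> \<le> \<eta>}"

definition Kfun :: "real measure \<Rightarrow> complex \<Rightarrow> complex" where
  "Kfun p z = 1 / (1 - cfz p z) - 1 / (- \<i> * complex_of_real (mean p) * z)"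

end

theory Submission
  imports Defs "HOL-Complex_Analysis.Complex_Analysis"
begin


locale mom =
  fixes p :: "real measure" and \<tau> B :: real
  assumes ps: "prob_space p" and sp: "sets p = sets borel" and tau: "0 < \<tau>"
    and Bnn: "0 \<le> B"
    and Bb: "(\<integral>\<^sup>+ x. ennreal (exp (\<tau> * \<bar>x\<bar>)) \<partial>p) \<le> ennreal B"
begin

interpretation P: prob_space p by (rule ps)

lemma meas: assumes "f \<in> borel_measurable borel" shows "f \<in> borel_measurable p"
  using assms measurable_cong_sets[OF sp refl, of borel] by metis

lemma intE: "integrable p (\<lambda>x. exp (\<tau> * \<bar>x\<bar>)) \<and> (\<integral>x. exp (\<tau> * \<bar>x\<bar>) \<partial>p) \<le> B"
proof -
  have m: "(\<lambda>x. exp (\<tau> * \<bar>x\<bar>)) \<in> borel_measurable p"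
    by (intro meas borel_measurable_continuous_onI continuous_intros)
  have fin: "(\<integral>\<^sup>+ x. ennreal (norm (exp (\<tau> * \<bar>x\<bar>))) \<partial>p) < \<infinity>"
    using Bb by (simp add: le_less_trans)
  have i: "integrable p (\<lambda>x. exp (\<tau> * \<bar>x\<bar>))"
    by (rule integrableI_bounded[OF m fin])
  have "ennreal (\<integral>x. exp (\<tau> * \<bar>x\<bar>) \<partial>p) = (\<integral>\<^sup>+ x. ennreal (exp (\<tau> * \<bar>x\<bar>)) \<partial>p)"
    by (rule nn_integral_eq_integral[symmetric]) (use i in auto)
  with Bb Bnn have "(\<integral>x. exp (\<tau> * \<bar>x\<bar>) \<partial>p) \<le> B"
    by (metis ennreal_le_iff)
  with i show ?thesis by blast
qed

lemma dom:
  fixes g :: "real \<Rightarrow> 'a::{banach, second_countable_topology}"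
  assumes gm: "g \<in> borel_measurable borel" and C: "0 \<le> C"
    and gb: "\<And>x. norm (g x) \<le> C * exp (\<tau> * \<bar>x\<bar>)"
  shows "integrable p g" "(\<integral>x. norm (g x) \<partial>p) \<le> C * B"
proof -
  have i: "integrable p (\<lambda>x. C * exp (\<tau> * \<bar>x\<bar>))" using intE by auto
  show ig: "integrable p g"
    by (rule Bochner_Integration.integrable_bound[OF i meas[OF gm]])
       (use gb C in \<open>auto intro!: AE_I2 simp: abs_of_nonneg\<close>)
  have "(\<integral>x. norm (g x) \<partial>p) \<le> (\<integral>x. C * exp (\<tau> * \<bar>x\<bar>) \<partial>p)"
    by (rule integral_mono[OF integrable_norm[OF ig] i]) (use gb in auto)
  also have "\<dots> = C * (\<integral>x. exp (\<tau> * \<bar>x\<bar>) \<partial>p)" by simp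
  also have "\<dots> \<le> C * B" using intE C by (intro mult_left_mono) auto
  finally show "(\<integral>x. norm (g x) \<partial>p) \<le> C * B" .
qed

lemma dom_norm:
  fixes g :: "real \<Rightarrow> 'a::{banach, second_countable_topology}"
  assumes gm: "g \<in> borel_measurable borel" and C: "0 \<le> C"
    and gb: "\<And>x. norm (g x) \<le> C * exp (\<tau> * \<bar>x\<bar>)"
  shows "norm (\<integral>x. g x \<partial>p) \<le> C * B"
  using dom[OF assms] integral_norm_bound[of p g] by linarith

lemma norm_cexp: "norm (exp (\<i> * z * complex_of_real x)) = exp (- Im z * x)"
  by (simp add: norm_exp_eq_Re)

lemma cexp_meas: "(\<lambda>x::real. exp (\<i> * z * complex_of_real x)) \<in> borel_measurable borel"
  by (intro borel_measurable_continuous_onI continuous_intros)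

lemma analytic:
  assumes eta: "0 \<le> \<eta>" and rho: "0 < \<rho>" and er: "\<eta> + \<rho> \<le> \<tau>"
  shows "cfz p analytic_on strip \<eta>"
  unfolding analytic_on_def
proof
  fix z0 assume "z0 \<in> strip \<eta>"
  then have z0: "\<bar>Im z0\<bar> \<le> \<eta>" by (simp add: strip_def)
  define a where "a k = (\<integral>x. exp (\<i> * z0 * complex_of_real x) * (\<i> * complex_of_real x) ^ k / fact k \<partial>p)" for k
  have "cfz p holomorphic_on ball z0 \<rho>"
  proof (rule power_series_holomorphic[where a=a])
    fix w assume "w \<in> ball z0 \<rho>"
    then have wz: "norm (w - z0) < \<rho>" by (simp add: dist_norm norm_minus_commute)
    define t where "t k x = exp (\<i> * z0 * complex_of_real x) * ((\<i> * complex_of_real x * (w - z0)) ^ k /\<^sub>R fact k)" for k x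
    have bexp: "norm (exp (\<i> * z0 * complex_of_real x)) * exp (norm (\<i> * complex_of_real x * (w - z0))) \<le> exp (\<tau> * \<bar>x\<bar>)" for x
    proof -
      have "norm (exp (\<i> * z0 * complex_of_real x)) \<le> exp (\<eta> * \<bar>x\<bar>)"
        unfolding norm_cexp
      proof (rule exp_mono)
        have "- Im z0 * x \<le> \<bar>Im z0\<bar> * \<bar>x\<bar>" by (metis abs_ge_self abs_minus_cancel abs_mult mult_minus_left)
        also have "\<dots> \<le> \<eta> * \<bar>x\<bar>" using z0 by (intro mult_right_mono) auto
        finally show "- Im z0 * x \<le> \<eta> * \<bar>x\<bar>" .
      qed
      moreover have "exp (norm (\<i> * complex_of_real x * (w - z0))) \<le> exp (\<rho> * \<bar>x\<bar>)"
        using mult_right_mono[of "cmod (w-z0)" \<rho> "\<bar>x\<bar>"] wz by (auto simp: norm_mult mult.commute)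
      ultimately have "norm (exp (\<i> * z0 * complex_of_real x)) * exp (norm (\<i> * complex_of_real x * (w - z0))) \<le> exp (\<eta> * \<bar>x\<bar>) * exp (\<rho> * \<bar>x\<bar>)"
        by (intro mult_mono) auto
      also have "\<dots> = exp ((\<eta> + \<rho>) * \<bar>x\<bar>)" by (simp add: exp_add[symmetric] algebra_simps)
      also have "\<dots> \<le> exp (\<tau> * \<bar>x\<bar>)" using er by (intro exp_mono mult_right_mono) auto
      finally show ?thesis .
    qed
    have tm: "t k \<in> borel_measurable borel" for k
      unfolding t_def by (intro borel_measurable_continuous_onI continuous_intros)
    have tb: "norm (t k x) \<le> exp (\<tau> * \<bar>x\<bar>)" for k x
    proof -
      let ?y = "\<i> * complex_of_real x * (w - z0)"
      have "norm (?y ^ k /\<^sub>R fact k) \<le> exp (norm ?y)"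
      proof -
        have "norm (?y ^ k /\<^sub>R fact k) = norm ?y ^ k / fact k" by (simp add: norm_power divide_inverse mult.commute)
        also have "\<dots> \<le> exp (norm ?y)"
          using sum_le_suminf[OF summable_exp_generic[of "norm ?y"], of "{k}"]
          by (simp add: exp_def scaleR_conv_of_real divide_simps)
        finally show ?thesis .
      qed
      then have "norm (t k x) \<le> norm (exp (\<i> * z0 * complex_of_real x)) * exp (norm ?y)"
        unfolding t_def norm_mult by (intro mult_left_mono) auto
      also have "\<dots> \<le> exp (\<tau> * \<bar>x\<bar>)" by (rule bexp)
      finally show ?thesis .
    qed
    have ti: "integrable p (t k)" for k by (rule dom(1)[OF tm, of 1]) (use tb in auto)
    have tint: "(\<integral>x. t k x \<partial>p) = a k * (w - z0) ^ k" for k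
    proof -
      have "t k x = (w - z0) ^ k * (exp (\<i> * z0 * complex_of_real x) * (\<i> * complex_of_real x) ^ k / fact k)" for x
        unfolding t_def power_mult_distrib[of "\<i> * complex_of_real x" "w-z0"] by (simp add: scaleR_conv_of_real divide_inverse mult_ac)
      then show ?thesis unfolding a_def by (simp add: mult.commute)
    qed
    define s where "s n x = (\<Sum>k<n. t k x)" for n x
    have lim: "(\<lambda>n. \<integral>x. s n x \<partial>p) \<longlonglongrightarrow> (\<integral>x. exp (\<i> * w * complex_of_real x) \<partial>p)"
    proof (rule integral_dominated_convergence[where w="\<lambda>x. exp (\<tau> * \<bar>x\<bar>)"])
      show "(\<lambda>x. exp (\<i> * w * complex_of_real x)) \<in> borel_measurable p" by (rule meas[OF cexp_meas])
      show "s n \<in> borel_measurable p" for n unfolding s_def using tm by (intro meas borel_measurable_sum) auto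
      show "integrable p (\<lambda>x. exp (\<tau> * \<bar>x\<bar>))" using intE by blast
      show "AE x in p. (\<lambda>n. s n x) \<longlonglongrightarrow> exp (\<i> * w * complex_of_real x)"
      proof (intro AE_I2)
        fix x
        have "(\<lambda>k. exp (\<i> * z0 * complex_of_real x) * ((\<i> * complex_of_real x * (w - z0)) ^ k /\<^sub>R fact k))
              sums (exp (\<i> * z0 * complex_of_real x) * exp (\<i> * complex_of_real x * (w - z0)))"
          by (intro sums_mult exp_converges)
        moreover have "exp (\<i> * z0 * complex_of_real x) * exp (\<i> * complex_of_real x * (w - z0)) = exp (\<i> * w * complex_of_real x)"
          by (simp add: exp_add[symmetric] algebra_simps)
        ultimately show "(\<lambda>n. s n x) \<longlonglongrightarrow> exp (\<i> * w * complex_of_real x)"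
          by (simp add: sums_def s_def t_def)
      qed
      show "AE x in p. norm (s n x) \<le> exp (\<tau> * \<bar>x\<bar>)" for n
      proof (intro AE_I2)
        fix x
        let ?y = "\<i> * complex_of_real x * (w - z0)"
        have "norm (s n x) \<le> (\<Sum>k<n. norm (t k x))" unfolding s_def by (rule norm_sum)
        also have "\<dots> = norm (exp (\<i> * z0 * complex_of_real x)) * (\<Sum>k<n. norm ?y ^ k / fact k)"
          by (simp add: t_def norm_mult norm_power sum_distrib_left divide_inverse mult_ac)
        also have "\<dots> \<le> norm (exp (\<i> * z0 * complex_of_real x)) * exp (norm ?y)"
        proof (intro mult_left_mono)
          show "(\<Sum>k<n. norm ?y ^ k / fact k) \<le> exp (norm ?y)"
            using sum_le_suminf[OF summable_exp_generic[of "norm ?y"], of "{..<n}"]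
            by (simp add: exp_def scaleR_conv_of_real divide_simps)
        qed auto
        also have "\<dots> \<le> exp (\<tau> * \<bar>x\<bar>)" by (rule bexp)
        finally show "norm (s n x) \<le> exp (\<tau> * \<bar>x\<bar>)" .
      qed
    qed
    have "(\<lambda>n. \<integral>x. s n x \<partial>p) = (\<lambda>n. \<Sum>k<n. a k * (w - z0) ^ k)"
      unfolding s_def using ti tint by (simp add: integral_sum)
    with lim show "(\<lambda>n. a n * (w - z0) ^ n) sums cfz p w"
      by (simp add: sums_def cfz_def)
  qed
  then show "\<exists>e>0. cfz p holomorphic_on ball z0 e" using rho by blast
qed

end


lemma b_aux:
  fixes z :: complex
  shows "norm (z ^ (k + 2) /\<^sub>R fact (k + 2)) \<le> norm z ^ 2 / 2 * (norm z ^ k /\<^sub>R fact k)"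
proof -
  have f: "2 * fact k \<le> (fact (k + 2) :: real)"
  proof -
    have "(fact (k+2) :: real) = (of_nat k + 2) * (of_nat k + 1) * fact k"
      by (simp add: fact_Suc algebra_simps eval_nat_numeral)
    moreover have "2 \<le> (of_nat k + 2) * (of_nat k + (1::real))" by (simp add: algebra_simps)
    ultimately show ?thesis by (metis fact_ge_zero mult_right_mono)
  qed
  have F0: "(0::real) < fact (k + 2)" by (rule fact_gt_zero)
  define F :: real where "F = fact (k + 2)"
  have n: "norm (z ^ (k + 2)) = norm z ^ 2 * norm z ^ k" by (metis norm_power power_add mult.commute)
  have "norm (z ^ (k + 2) /\<^sub>R fact (k + 2)) = norm z ^ 2 * norm z ^ k / F"
    unfolding F_def[symmetric] using F0 n unfolding F_def[symmetric] by (simp add: divide_inverse mult.commute)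
  also have "\<dots> \<le> norm z ^ 2 * norm z ^ k / (2 * fact k)"
    using f F0 unfolding F_def[symmetric] by (intro divide_left_mono) (auto intro!: mult_pos_pos)
  also have "\<dots> = norm z ^ 2 / 2 * (norm z ^ k /\<^sub>R fact k)"
    by (simp add: field_simps)
  finally show ?thesis .
qed

lemma exp_taylor2:
  fixes z :: complex
  shows "norm (exp z - 1 - z) \<le> norm z ^ 2 / 2 * exp (norm z)"
proof -
  have sums: "(\<lambda>k. z ^ (k + 2) /\<^sub>R fact (k + 2)) sums (exp z - (\<Sum>k<2. z ^ k /\<^sub>R fact k))"
    by (intro sums_split_initial_segment exp_converges)
  then have e: "exp z - 1 - z = (\<Sum>k. z ^ (k + 2) /\<^sub>R fact (k + 2))"
    by (simp add: sums_iff eval_nat_numeral)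
  have g: "(\<lambda>k. norm z ^ 2 / 2 * (norm z ^ k /\<^sub>R fact k)) sums (norm z ^ 2 / 2 * exp (norm z))"
    by (intro sums_mult exp_converges)
  have b: "norm (z ^ (k + 2) /\<^sub>R fact (k + 2)) \<le> norm z ^ 2 / 2 * (norm z ^ k /\<^sub>R fact k)" for k
    by (rule b_aux)
  show ?thesis unfolding e using norm_suminf_le[OF b sums_summable[OF g]] g
    by (simp add: sums_iff)
qed

lemma real_exp_sub1: "\<bar>exp (a::real) - 1\<bar> \<le> \<bar>a\<bar> * exp \<bar>a\<bar>"
proof (cases "a \<ge> 0")
  case True
  have "1 - a \<le> exp (-a)" using exp_ge_add_one_self[of "-a"] by simp
  then have "(1 - a) * exp a \<le> 1" by (simp add: exp_minus field_simps)
  then show ?thesis using True by (simp add: algebra_simps)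
next
  case False
  have "\<bar>exp a - 1\<bar> = 1 - exp a" using False by simp
  also have "\<dots> \<le> \<bar>a\<bar>"
  proof -
    have h: "1 + a \<le> exp a" by (rule exp_ge_add_one_self)
    have "\<bar>a\<bar> = -a" using False by simp
    with h show ?thesis by linarith
  qed
  also have "\<dots> \<le> \<bar>a\<bar> * exp \<bar>a\<bar>" using mult_left_mono[OF one_le_exp_iff[THEN iffD2, of "\<bar>a\<bar>"], of "\<bar>a\<bar>"] by simp
  finally show ?thesis .
qed

lemma sq_le_exp: "0 \<le> (y::real) \<Longrightarrow> y ^ 2 / 2 \<le> exp y"
  using sum_le_suminf[OF summable_exp_generic[of y], of "{2}"]
  by (simp add: exp_def scaleR_conv_of_real divide_simps)

context mom
begin

interpretation P: prob_space p by (rule ps)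

lemma cexp_int: assumes "\<bar>Im z\<bar> \<le> \<tau>" shows "integrable p (\<lambda>x. exp (\<i> * z * complex_of_real x))"
proof (rule dom(1)[OF cexp_meas, of 1])
  fix x
  have "- Im z * x \<le> \<tau> * \<bar>x\<bar>"
    using mult_right_mono[OF assms abs_ge_zero[of x]] by (metis abs_ge_self abs_minus_cancel abs_mult mult_minus_left order_trans)
  then show "norm (exp (\<i> * z * complex_of_real x)) \<le> 1 * exp (\<tau> * \<bar>x\<bar>)"
    by (simp only: norm_cexp) simp
qed simp

lemma x_int: "integrable p (\<lambda>x. x)"
proof (rule dom(1)[of _ "1/\<tau>"])
  fix x :: real
  have "\<tau> * \<bar>x\<bar> \<le> exp (\<tau> * \<bar>x\<bar>)" using exp_ge_add_one_self[of "\<tau> * \<bar>x\<bar>"] by linarith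
  then show "norm x \<le> 1 / \<tau> * exp (\<tau> * \<bar>x\<bar>)" using tau by (simp add: field_simps)
qed (use tau in auto)

lemma taylor:
  assumes z: "norm z \<le> \<tau> / 2"
  shows "norm (cfz p z - 1 - \<i> * complex_of_real (mean p) * z) \<le> (4 * B / \<tau>\<^sup>2) * norm z ^ 2"
proof -
  have imz: "\<bar>Im z\<bar> \<le> \<tau>" using abs_Im_le_cmod[of z] z tau by linarith
  have i1: "integrable p (\<lambda>x. exp (\<i> * z * complex_of_real x))" by (rule cexp_int[OF imz])
  have i2: "integrable p (\<lambda>x. \<i> * z * complex_of_real x)"
    using x_int by (intro integrable_mult_right integrable_of_real)
  have eq: "cfz p z - 1 - \<i> * complex_of_real (mean p) * z
      = (\<integral>x. exp (\<i> * z * complex_of_real x) - 1 - \<i> * z * complex_of_real x \<partial>p)"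
  proof -
    have i0: "integrable p (\<lambda>x. (1::complex))" by simp
    have c1: "(\<integral>x. (1::complex) \<partial>p) = 1" by (simp add: P.prob_space)
    have c2: "(\<integral>x. \<i> * z * complex_of_real x \<partial>p) = \<i> * z * complex_of_real (mean p)"
      unfolding mean_def by (simp only: integral_mult_right_zero integral_complex_of_real)
    have "(\<integral>x. exp (\<i> * z * complex_of_real x) - 1 - \<i> * z * complex_of_real x \<partial>p)
        = (\<integral>x. exp (\<i> * z * complex_of_real x) - 1 \<partial>p) - (\<integral>x. \<i> * z * complex_of_real x \<partial>p)"
      by (rule Bochner_Integration.integral_diff[OF Bochner_Integration.integrable_diff[OF i1 i0] i2])
    also have "(\<integral>x. exp (\<i> * z * complex_of_real x) - 1 \<partial>p) = cfz p z - 1"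
      using Bochner_Integration.integral_diff[OF i1 i0] c1 unfolding cfz_def by simp
    finally show ?thesis unfolding c2 by (simp add: mult_ac)
  qed
  have "norm (\<integral>x. exp (\<i> * z * complex_of_real x) - 1 - \<i> * z * complex_of_real x \<partial>p)
        \<le> (4 / \<tau>\<^sup>2 * norm z ^ 2) * B"
  proof (rule dom_norm)
    show "(\<lambda>x. exp (\<i> * z * complex_of_real x) - 1 - \<i> * z * complex_of_real x) \<in> borel_measurable borel"
      by (intro borel_measurable_continuous_onI continuous_intros)
    show "0 \<le> 4 / \<tau>\<^sup>2 * norm z ^ 2" by simp
    fix x
    let ?w = "\<i> * z * complex_of_real x"
    have nw: "norm ?w = norm z * \<bar>x\<bar>" by (simp add: norm_mult)
    have "norm (exp ?w - 1 - ?w) \<le> norm ?w ^ 2 / 2 * exp (norm ?w)" by (rule exp_taylor2)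
    also have "\<dots> \<le> (norm z ^ 2 * (x ^ 2 / 2)) * exp (\<tau> / 2 * \<bar>x\<bar>)"
    proof -
      have a1: "(norm z * \<bar>x\<bar>) ^ 2 / 2 = norm z ^ 2 * (x ^ 2 / 2)" by (simp add: power_mult_distrib)
      have a2: "exp (norm z * \<bar>x\<bar>) \<le> exp (\<tau> / 2 * \<bar>x\<bar>)"
        using mult_right_mono[OF z abs_ge_zero[of x]] by simp
      have a3: "0 \<le> norm z ^ 2 * (x ^ 2 / 2)" by simp
      show ?thesis unfolding nw a1 by (rule mult_left_mono[OF a2 a3])
    qed
    also have "\<dots> \<le> (norm z ^ 2 * (4 / \<tau>\<^sup>2 * exp (\<tau> / 2 * \<bar>x\<bar>))) * exp (\<tau> / 2 * \<bar>x\<bar>)"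
    proof -
      have "(\<tau> / 2 * \<bar>x\<bar>) ^ 2 / 2 \<le> exp (\<tau> / 2 * \<bar>x\<bar>)" by (rule sq_le_exp) (use tau in auto)
      then have hx: "x ^ 2 / 2 \<le> 4 / \<tau>\<^sup>2 * exp (\<tau> / 2 * \<bar>x\<bar>)"
      proof -
        assume h: "(\<tau> / 2 * \<bar>x\<bar>) ^ 2 / 2 \<le> exp (\<tau> / 2 * \<bar>x\<bar>)"
        have q: "4 / \<tau>\<^sup>2 * ((\<tau> / 2 * \<bar>x\<bar>) ^ 2 / 2) = x ^ 2 / 2"
          using tau by (simp add: power_mult_distrib power_divide)
        have "4 / \<tau>\<^sup>2 * ((\<tau> / 2 * \<bar>x\<bar>) ^ 2 / 2) \<le> 4 / \<tau>\<^sup>2 * exp (\<tau> / 2 * \<bar>x\<bar>)"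
          using h by (intro mult_left_mono) auto
        then show ?thesis unfolding q .
      qed
      show ?thesis by (rule mult_right_mono[OF mult_left_mono[OF hx]]) simp_all
    qed
    also have "\<dots> = 4 / \<tau>\<^sup>2 * norm z ^ 2 * exp (\<tau> * \<bar>x\<bar>)"
    proof -
      have e: "exp (\<tau> / 2 * \<bar>x\<bar>) * exp (\<tau> / 2 * \<bar>x\<bar>) = exp (\<tau> * \<bar>x\<bar>)"
      proof -
        have "\<tau> * \<bar>x\<bar> = \<tau> / 2 * \<bar>x\<bar> + \<tau> / 2 * \<bar>x\<bar>" by simp
        then show ?thesis by (simp only: exp_add)
      qed
      show ?thesis by (simp only: e[symmetric]; simp add: mult_ac)
    qed
    finally show "norm (exp ?w - 1 - ?w) \<le> 4 / \<tau>\<^sup>2 * norm z ^ 2 * exp (\<tau> * \<bar>x\<bar>)" .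
  qed
  then show ?thesis unfolding eq by (simp add: mult_ac)
qed

lemma shift:
  assumes y: "\<bar>Im z\<bar> \<le> \<tau> / 2"
  shows "norm (cfz p z - cfz p (complex_of_real (Re z))) \<le> \<bar>Im z\<bar> * (2 * B / \<tau>)"
proof -
  have i1: "integrable p (\<lambda>x. exp (\<i> * z * complex_of_real x))" by (rule cexp_int) (use y tau in auto)
  have i2: "integrable p (\<lambda>x. exp (\<i> * complex_of_real (Re z) * complex_of_real x))" by (rule cexp_int) (use tau in auto)
  have eq: "cfz p z - cfz p (complex_of_real (Re z)) =
     (\<integral>x. exp (\<i> * z * complex_of_real x) - exp (\<i> * complex_of_real (Re z) * complex_of_real x) \<partial>p)"
    using i1 i2 by (simp add: cfz_def integral_diff)
  have "norm (\<integral>x. exp (\<i> * z * complex_of_real x) - exp (\<i> * complex_of_real (Re z) * complex_of_real x) \<partial>p)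
      \<le> (\<bar>Im z\<bar> * (2 / \<tau>)) * B"
  proof (rule dom_norm)
    show "(\<lambda>x. exp (\<i> * z * complex_of_real x) - exp (\<i> * complex_of_real (Re z) * complex_of_real x)) \<in> borel_measurable borel"
      by (intro borel_measurable_continuous_onI continuous_intros)
    show "0 \<le> \<bar>Im z\<bar> * (2 / \<tau>)" using tau by simp
    fix x
    have split: "\<i> * z * complex_of_real x = \<i> * complex_of_real (Re z) * complex_of_real x + complex_of_real (- Im z * x)"
      by (simp add: complex_eq_iff)
    have "exp (\<i> * z * complex_of_real x) - exp (\<i> * complex_of_real (Re z) * complex_of_real x)
        = exp (\<i> * complex_of_real (Re z) * complex_of_real x) * complex_of_real (exp (- Im z * x) - 1)"
      unfolding split exp_add exp_of_real of_real_diff by (simp add: algebra_simps)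
    note eqd = this
    have "norm (exp (\<i> * z * complex_of_real x) - exp (\<i> * complex_of_real (Re z) * complex_of_real x))
        = \<bar>exp (- Im z * x) - 1\<bar>"
      unfolding eqd norm_mult norm_cexp norm_of_real by simp
    also have "\<dots> \<le> \<bar>- Im z * x\<bar> * exp \<bar>- Im z * x\<bar>" by (rule real_exp_sub1)
    also have "\<dots> \<le> (\<bar>Im z\<bar> * \<bar>x\<bar>) * exp (\<tau> / 2 * \<bar>x\<bar>)"
    proof -
      have a1: "\<bar>- Im z * x\<bar> = \<bar>Im z\<bar> * \<bar>x\<bar>" by (simp add: abs_mult)
      have a2: "exp (\<bar>Im z\<bar> * \<bar>x\<bar>) \<le> exp (\<tau> / 2 * \<bar>x\<bar>)"
        using mult_right_mono[OF y abs_ge_zero[of x]] by simp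
      have a3: "0 \<le> \<bar>Im z\<bar> * \<bar>x\<bar>" by simp
      show ?thesis unfolding a1 by (rule mult_left_mono[OF a2 a3])
    qed
    also have "\<dots> \<le> (\<bar>Im z\<bar> * (2 / \<tau> * exp (\<tau> / 2 * \<bar>x\<bar>))) * exp (\<tau> / 2 * \<bar>x\<bar>)"
    proof -
      have "\<tau> / 2 * \<bar>x\<bar> \<le> exp (\<tau> / 2 * \<bar>x\<bar>)" using exp_ge_add_one_self[of "\<tau> / 2 * \<bar>x\<bar>"] by linarith
      then have "\<bar>x\<bar> \<le> 2 / \<tau> * exp (\<tau> / 2 * \<bar>x\<bar>)" using tau by (simp add: field_simps)
      then show ?thesis by (intro mult_right_mono mult_left_mono) auto
    qed
    also have "\<dots> = \<bar>Im z\<bar> * (2 / \<tau>) * exp (\<tau> * \<bar>x\<bar>)"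
    proof -
      have e: "exp (\<tau> / 2 * \<bar>x\<bar>) * exp (\<tau> / 2 * \<bar>x\<bar>) = exp (\<tau> * \<bar>x\<bar>)"
      proof -
        have "\<tau> * \<bar>x\<bar> = \<tau> / 2 * \<bar>x\<bar> + \<tau> / 2 * \<bar>x\<bar>" by simp
        then show ?thesis by (simp only: exp_add)
      qed
      show ?thesis by (simp only: e[symmetric]; simp add: mult_ac)
    qed
    finally show "norm (exp (\<i> * z * complex_of_real x) - exp (\<i> * complex_of_real (Re z) * complex_of_real x))
        \<le> \<bar>Im z\<bar> * (2 / \<tau>) * exp (\<tau> * \<bar>x\<bar>)" .
  qed
  then show ?thesis unfolding eq by (simp add: mult_ac)
qed

lemma re_real: "Re (1 - cfz p (complex_of_real x)) = (\<integral>t. 1 - cos (x * t) \<partial>p)"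
proof -
  have i: "integrable p (\<lambda>t. exp (\<i> * complex_of_real x * complex_of_real t))" by (rule cexp_int) (use tau in auto)
  have "Re (cfz p (complex_of_real x)) = (\<integral>t. cos (x * t) \<partial>p)"
    unfolding cfz_def integral_Re[OF i, symmetric]
    by (intro Bochner_Integration.integral_cong refl) (simp add: Re_exp mult_ac)
  moreover have "integrable p (\<lambda>t. cos (x * t))"
    using integrable_Re[OF i] by (simp add: Re_exp mult_ac)
  moreover have "(\<integral>t. (1::real) \<partial>p) = 1" by (simp add: P.prob_space)
  ultimately show ?thesis using Bochner_Integration.integral_diff[of p "\<lambda>_. 1::real" "\<lambda>t. cos (x * t)"] by simp
qed

end


lemma phi_bound:
  fixes f :: "real \<Rightarrow> real"
  assumes T: "0 < T" and d1: "\<forall>x. f differentiable at x" and d2: "\<forall>x. deriv f differentiable at x"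
    and c: "continuous_on UNIV (deriv (deriv f))" and a: "0 \<le> a" "a < T"
    and z: "\<forall>x. a < \<bar>x\<bar> \<longrightarrow> f x = 0"
    and bnd: "integral {-T..T} (\<lambda>x. \<bar>deriv (deriv f) x\<bar>) \<le> B2"
  shows "\<bar>f x\<bar> \<le> 2 * T * B2"
proof -
  define f' where "f' = deriv f"
  define f'' where "f'' = deriv f'"
  have D1: "(f has_real_derivative f' x) (at x)" for x
    using d1 DERIV_deriv_iff_real_differentiable f'_def by blast
  have D2: "(f' has_real_derivative f'' x) (at x)" for x
    using d2 DERIV_deriv_iff_real_differentiable f'_def f''_def by blast
  have f'0: "f' x = 0" if "a < \<bar>x\<bar>" for x
  proof -
    have op: "open {y::real. a < \<bar>y\<bar>}" by (intro open_Collect_less continuous_intros)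
    have "((\<lambda>_. 0) has_real_derivative f' x) (at x)"
      by (rule has_field_derivative_transform_within_open[OF D1[of x], of "{y. a < \<bar>y\<bar>}"])
         (use that z op in auto)
    then show ?thesis using DERIV_const DERIV_unique by blast
  qed
  have cf'': "continuous_on S f''" for S using c f'_def f''_def continuous_on_subset by blast
  have B2nn: "0 \<le> B2"
  proof -
    have "0 \<le> integral {-T..T} (\<lambda>x. \<bar>deriv (deriv f) x\<bar>)" by (rule integral_nonneg) (auto intro!: integrable_continuous_interval continuous_intros cf''[unfolded f''_def f'_def])
    with bnd show ?thesis by linarith
  qed
  have f'b: "\<bar>f' s\<bar> \<le> B2" for s
  proof (cases "s \<in> {-T..T}")
    case False
    then have "a < \<bar>s\<bar>" using a by auto
    then show ?thesis using f'0 B2nn by simp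
  next
    case True
    have "(f'' has_integral f' s - f' (-T)) {-T..s}"
      by (rule fundamental_theorem_of_calculus) (use True D2 in \<open>auto simp: has_real_derivative_iff_has_vector_derivative[symmetric] intro: has_field_derivative_at_within\<close>)
    moreover have "f' (-T) = 0" using f'0 a by simp
    ultimately have e: "f' s = integral {-T..s} f''" by (simp add: integral_unique)
    have "\<bar>integral {-T..s} f''\<bar> \<le> integral {-T..s} (\<lambda>x. \<bar>f'' x\<bar>)"
      using integral_norm_bound_integral[of f'' "{-T..s}" "\<lambda>x. \<bar>f'' x\<bar>"]
      by (auto intro!: integrable_continuous_interval continuous_intros cf'')
    also have "\<dots> \<le> integral {-T..T} (\<lambda>x. \<bar>f'' x\<bar>)"
      by (rule integral_subset_le) (use True in \<open>auto intro!: integrable_continuous_interval continuous_intros cf''\<close>)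
    also have "\<dots> \<le> B2" using bnd by (simp add: f''_def f'_def)
    finally show ?thesis using e by simp
  qed
  show ?thesis
  proof (cases "x \<in> {-T..T}")
    case False
    then have "a < \<bar>x\<bar>" using a by auto
    then show ?thesis using z B2nn T by simp
  next
    case True
    have "(f' has_integral f x - f (-T)) {-T..x}"
      by (rule fundamental_theorem_of_calculus) (use True D1 in \<open>auto simp: has_real_derivative_iff_has_vector_derivative[symmetric] intro: has_field_derivative_at_within\<close>)
    moreover have "f (-T) = 0" using z a by simp
    ultimately have i: "(f' has_integral f x) {-T..x}" by simp
    have "norm (f x) \<le> B2 * Henstock_Kurzweil_Integration.content {-T..x}"
      by (rule has_integral_bound_real[OF B2nn _ i, of "{}"]) (use f'b in auto)
    also have "\<dots> \<le> B2 * (2 * T)" using True B2nn by (intro mult_left_mono) auto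
    finally show ?thesis by (simp add: mult_ac)
  qed
qed


definition wc :: "real \<Rightarrow> real \<Rightarrow> real \<Rightarrow> real" where
  "wc M T \<rho> = min pi (1 / (4 * M * (T / pi + 5 / \<rho>)))"

lemma wc_pos: "0 < M \<Longrightarrow> 0 < T \<Longrightarrow> 0 < \<rho> \<Longrightarrow> 0 < wc M T \<rho> \<and> wc M T \<rho> \<le> pi"
  unfolding wc_def by (auto intro!: divide_pos_pos mult_pos_pos add_pos_pos)

lemma wc_cos: "0 < M \<Longrightarrow> 0 < T \<Longrightarrow> 0 < \<rho> \<Longrightarrow> 0 < 1 - cos (wc M T \<rho>)"
proof -
  assume a: "0 < M" "0 < T" "0 < \<rho>"
  then have w: "0 < wc M T \<rho>" "wc M T \<rho> < 2 * pi" using wc_pos[OF a] pi_gt_zero by linarith+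
  have "cos (wc M T \<rho>) \<noteq> 1"
  proof
    assume "cos (wc M T \<rho>) = 1"
    then obtain n :: int where "wc M T \<rho> = of_int n * 2 * pi" using cos_one_2pi_int by auto
    with w have "(0::real) < of_int n" "of_int n < (1::real)" by (auto simp: zero_less_mult_iff)
    then have "0 < n" "n < 1" by simp_all
    then show False by simp
  qed
  moreover have "cos (wc M T \<rho>) \<le> 1" by simp
  ultimately show ?thesis by linarith
qed

lemma cover:
  fixes \<phi> :: "real \<Rightarrow> real" and M T \<rho> x :: real
  assumes nn: "\<forall>t. 0 \<le> \<phi> t" and le: "\<forall>t. \<phi> t \<le> M" and M: "0 < M" and T: "0 < T"
    and supp: "\<forall>t. T < \<bar>t\<bar> \<longrightarrow> \<phi> t = 0" and int: "integrable lborel \<phi>"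
    and one: "(\<integral>t. \<phi> t \<partial>lborel) = 1"
    and rho: "0 < \<rho>" and x: "\<rho> \<le> \<bar>x\<bar>"
  shows "(1 - cos (wc M T \<rho>)) / 2 \<le> (\<integral>t. \<phi> t * (1 - cos (x * t)) \<partial>lborel)"
proof -
  define w where "w = wc M T \<rho>"
  have w0: "0 < w" and wpi: "w \<le> pi" using wc_pos[OF M T rho] by (auto simp: w_def)
  have cw: "0 \<le> 1 - cos w" by simp
  have x0: "x \<noteq> 0" "0 < \<bar>x\<bar>" using x rho by auto
  define r where "r = w / \<bar>x\<bar>"
  have r0: "0 < r" using w0 x0 by (simp add: r_def)
  define N :: int where "N = \<lceil>T * \<bar>x\<bar> / (2 * pi)\<rceil> + 1"
  define Ks where "Ks = {-N..N}"
  define I where "I k = {2 * pi * of_int k / x - r <..< 2 * pi * of_int k / x + r}" for k :: int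
  have Isets: "I k \<in> sets lborel" for k unfolding I_def by simp
  have memb: "t \<in> I k" if "\<bar>x * t - 2 * pi * of_int k\<bar> < w" for t k
  proof -
    have "\<bar>x * t - 2 * pi * of_int k\<bar> = \<bar>x\<bar> * \<bar>t - 2 * pi * of_int k / x\<bar>"
      using x0 by (simp add: abs_mult[symmetric] algebra_simps)
    with that have "\<bar>t - 2 * pi * of_int k / x\<bar> < r" using x0 by (simp add: r_def field_simps mult.commute)
    then show ?thesis unfolding I_def by auto
  qed
  define S where "S t = (\<Sum>k\<in>Ks. indicator (I k) t * \<phi> t)" for t
  have Snn: "0 \<le> S t" for t unfolding S_def using nn by (intro sum_nonneg) auto
  have pw: "(1 - cos w) * (\<phi> t - S t) \<le> \<phi> t * (1 - cos (x * t))" for t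
  proof (cases "T < \<bar>t\<bar>")
    case True
    then show ?thesis using supp by (simp add: S_def)
  next
    case False
    define k0 where "k0 = \<lfloor>x * t / (2 * pi) + 1 / 2\<rfloor>"
    have fl: "of_int k0 \<le> x * t / (2 * pi) + 1 / 2" "x * t / (2 * pi) + 1 / 2 < of_int k0 + 1"
      using floor_correct[of "x * t / (2 * pi) + 1 / 2"] by (auto simp: k0_def)
    define u where "u = x * t - 2 * pi * of_int k0"
    have uabs: "\<bar>u\<bar> \<le> pi"
    proof -
      have "x * t < 2 * pi * of_int k0 + pi" "2 * pi * of_int k0 - pi \<le> x * t"
        using fl by (simp_all add: field_simps)
      then show ?thesis unfolding u_def by linarith
    qed
    have xt: "\<bar>x * t\<bar> \<le> T * \<bar>x\<bar>" using mult_right_mono[of "\<bar>t\<bar>" T "\<bar>x\<bar>"] False by (simp add: abs_mult mult.commute)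
    have k0N: "k0 \<in> Ks"
    proof -
      have c: "T * \<bar>x\<bar> / (2 * pi) \<le> of_int \<lceil>T * \<bar>x\<bar> / (2 * pi)\<rceil>" by simp
      have a: "\<bar>x * t / (2 * pi)\<bar> \<le> T * \<bar>x\<bar> / (2 * pi)" using xt by (simp add: abs_div divide_right_mono)
      then have a1: "x * t / (2 * pi) \<le> T * \<bar>x\<bar> / (2 * pi)" "- (T * \<bar>x\<bar> / (2 * pi)) \<le> x * t / (2 * pi)"
        unfolding abs_le_iff by linarith+
      have nN: "(of_int N :: real) = of_int \<lceil>T * \<bar>x\<bar> / (2 * pi)\<rceil> + 1" by (simp add: N_def)
      have "of_int k0 \<le> (of_int N :: real)" "of_int (- N) \<le> (of_int k0 :: real)"
        using fl c a1 nN by simp_all linarith+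
      then show ?thesis unfolding Ks_def by simp
    qed
    show ?thesis
    proof (cases "\<bar>u\<bar> < w")
      case True
      then have "t \<in> I k0" using memb by (simp add: u_def)
      then have "indicator (I k0) t * \<phi> t \<le> S t" unfolding S_def
        using nn k0N by (intro member_le_sum[of k0 Ks "\<lambda>k. indicator (I k) t * \<phi> t"]) (auto simp: Ks_def)
      then have "\<phi> t - S t \<le> 0" using \<open>t \<in> I k0\<close> by simp
      then have "(1 - cos w) * (\<phi> t - S t) \<le> 0" using cw by (simp add: mult_nonneg_nonpos)
      also have "0 \<le> \<phi> t * (1 - cos (x * t))" using nn by simp
      finally show ?thesis .
    next
      case False
      have "cos (x * t) = cos u"
      proof -
        have s: "sin (2 * pi * of_int k0) = 0" using sin_npi_int[of "2 * k0"] by (simp add: mult_ac)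
        have "x * t = u + 2 * pi * of_int k0" by (simp add: u_def)
        then show ?thesis by (simp add: cos_add s)
      qed
      also have "\<dots> = cos \<bar>u\<bar>" by simp
      also have "\<dots> \<le> cos w" using False uabs w0 by (intro cos_monotone_0_pi_le) auto
      finally have "1 - cos w \<le> 1 - cos (x * t)" by simp
      then have "(1 - cos w) * \<phi> t \<le> (1 - cos (x * t)) * \<phi> t" using nn by (intro mult_right_mono) auto
      moreover have "(1 - cos w) * (\<phi> t - S t) \<le> (1 - cos w) * \<phi> t" using cw Snn by (intro mult_left_mono) auto
      ultimately show ?thesis by (simp add: mult.commute)
    qed
  qed
  have phim: "\<phi> \<in> borel_measurable lborel" using int by auto
  have iI: "integrable lborel (\<lambda>t. indicator (I k) t * \<phi> t)" for k
    using integrable_mult_indicator[OF Isets int] by simp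
  have iS: "integrable lborel S" unfolding S_def
    by (rule Bochner_Integration.integrable_sum) (rule iI)
  have iL: "integrable lborel (\<lambda>t. \<phi> t * (1 - cos (x * t)))"
  proof (rule Bochner_Integration.integrable_bound[of _ "\<lambda>t. 2 * \<phi> t"])
    show "integrable lborel (\<lambda>t. 2 * \<phi> t)" using int by simp
    show "(\<lambda>t. \<phi> t * (1 - cos (x * t))) \<in> borel_measurable lborel" using phim by measurable
    show "AE t in lborel. norm (\<phi> t * (1 - cos (x * t))) \<le> norm (2 * \<phi> t)"
    proof (intro AE_I2)
      fix t
      have "\<bar>1 - cos (x * t)\<bar> \<le> 2" using cos_ge_minus_one[of "x*t"] cos_le_one[of "x*t"] by (simp add: abs_le_iff)
      then have "\<bar>\<phi> t\<bar> * \<bar>1 - cos (x * t)\<bar> \<le> \<bar>\<phi> t\<bar> * 2" by (intro mult_left_mono) auto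
      then show "norm (\<phi> t * (1 - cos (x * t))) \<le> norm (2 * \<phi> t)" by (simp add: abs_mult mult.commute)
    qed
  qed
  have bI: "(\<integral>t. indicator (I k) t * \<phi> t \<partial>lborel) \<le> M * (2 * r)" for k
  proof -
    have ii: "integrable lborel (indicat_real (I k))" unfolding I_def by (rule integrable_real_indicator) (use r0 in simp_all)
    have ii2: "integrable lborel (\<lambda>t. indicator (I k) t * M)" using ii by simp
    have "(\<integral>t. indicator (I k) t * \<phi> t \<partial>lborel) \<le> (\<integral>t. indicator (I k) t * M \<partial>lborel)"
      by (rule integral_mono[OF iI ii2]) (use le Isets in \<open>auto simp: I_def split: split_indicator\<close>)
    also have "\<dots> = M * (2 * r)" using r0 by (simp add: I_def mult.commute)
    finally show ?thesis .
  qed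
  have cardK: "real (card Ks) = 2 * of_int N + 1"
  proof -
    have "0 \<le> N" unfolding N_def using T x0 by (smt (verit) ceiling_le_zero divide_pos_pos mult_pos_pos pi_gt_zero)
    then show ?thesis by (simp add: Ks_def)
  qed
  have sumb: "(\<Sum>k\<in>Ks. \<integral>t. indicator (I k) t * \<phi> t \<partial>lborel) \<le> 1 / 2"
  proof -
    have "(\<Sum>k\<in>Ks. \<integral>t. indicator (I k) t * \<phi> t \<partial>lborel) \<le> (\<Sum>k\<in>Ks. M * (2 * r))"
      by (intro sum_mono bI)
    also have "\<dots> = (2 * of_int N + 1) * (M * (2 * r))" using cardK by simp
    also have "\<dots> \<le> (T * \<bar>x\<bar> / pi + 5) * (M * (2 * r))"
    proof (intro mult_right_mono)
      have "of_int \<lceil>T * \<bar>x\<bar> / (2 * pi)\<rceil> < T * \<bar>x\<bar> / (2 * pi) + 1"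
        using ceiling_correct[of "T * \<bar>x\<bar> / (2 * pi)"] by linarith
      then show "2 * of_int N + 1 \<le> T * \<bar>x\<bar> / pi + 5" unfolding N_def by (simp add: field_simps)
    qed (use M r0 in auto)
    also have "\<dots> = 2 * M * w * (T / pi + 5 / \<bar>x\<bar>)" using x0 by (simp add: r_def field_simps)
    also have "\<dots> \<le> 2 * M * w * (T / pi + 5 / \<rho>)"
      using M w0 x rho by (intro mult_left_mono add_left_mono divide_left_mono) auto
    also have "\<dots> \<le> 1 / 2"
    proof -
      have pos: "0 < 4 * M * (T / pi + 5 / \<rho>)" using M T rho by (intro mult_pos_pos add_pos_pos) auto
      have "w \<le> 1 / (4 * M * (T / pi + 5 / \<rho>))" unfolding w_def wc_def by simp
      then have "w * (4 * M * (T / pi + 5 / \<rho>)) \<le> 1" using pos by (simp add: field_simps)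
      then show ?thesis by (simp add: algebra_simps)
    qed
    finally show ?thesis .
  qed
  have "(\<integral>t. (1 - cos w) * (\<phi> t - S t) \<partial>lborel) \<le> (\<integral>t. \<phi> t * (1 - cos (x * t)) \<partial>lborel)"
    by (rule integral_mono[OF _ iL pw]) (intro integrable_mult_right Bochner_Integration.integrable_diff int iS)
  moreover have "(\<integral>t. (1 - cos w) * (\<phi> t - S t) \<partial>lborel) = (1 - cos w) * (1 - (\<Sum>k\<in>Ks. \<integral>t. indicator (I k) t * \<phi> t \<partial>lborel))"
    using int iS iI one by (simp add: Bochner_Integration.integral_diff S_def Bochner_Integration.integral_sum)
  moreover have "(1 - cos w) / 2 \<le> (1 - cos w) * (1 - (\<Sum>k\<in>Ks. \<integral>t. indicator (I k) t * \<phi> t \<partial>lborel))"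
  proof -
    have "1 / 2 \<le> 1 - (\<Sum>k\<in>Ks. \<integral>t. indicator (I k) t * \<phi> t \<partial>lborel)" using sumb by linarith
    from mult_left_mono[OF this cw] show ?thesis by simp
  qed
  ultimately show ?thesis unfolding w_def by linarith
qed


lemma K_small:
  fixes P z :: complex and \<mu> c0 M2 :: real
  assumes c0: "0 < c0" "c0 \<le> \<mu>" and z: "z \<noteq> 0"
    and t: "norm (P - 1 - \<i> * complex_of_real \<mu> * z) \<le> M2 * norm z ^ 2"
    and m: "M2 * norm z \<le> c0 / 2"
  shows "P \<noteq> 1" "norm (1 / (1 - P) - 1 / (- \<i> * complex_of_real \<mu> * z)) \<le> 2 * M2 / c0\<^sup>2"
proof -
  define A where "A = 1 - P"
  define D where "D = - \<i> * complex_of_real \<mu> * z"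
  have nz: "0 < norm z" using z by simp
  have mu: "0 < \<mu>" using c0 by linarith
  have nD: "norm D = \<mu> * norm z" using mu by (simp add: D_def norm_mult)
  have DA: "D - A = P - 1 - \<i> * complex_of_real \<mu> * z" by (simp add: D_def A_def)
  have nDA: "norm (D - A) \<le> M2 * norm z ^ 2" using t DA by simp
  have "M2 * norm z ^ 2 \<le> c0 / 2 * norm z" using mult_right_mono[OF m, of "norm z"] by (simp add: power2_eq_square mult_ac)
  also have "\<dots> \<le> \<mu> / 2 * norm z" using c0 by (intro mult_right_mono) auto
  finally have nDA2: "norm (D - A) \<le> \<mu> / 2 * norm z" using nDA by linarith
  have "norm D \<le> norm A + norm (D - A)" using norm_triangle_ineq[of A "D - A"] by simp
  then have nA: "\<mu> / 2 * norm z \<le> norm A" using nD nDA2 by linarith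
  have Apos: "0 < norm A" using nA mult_pos_pos[of "\<mu>/2" "norm z"] mu nz by linarith
  then show "P \<noteq> 1" by (auto simp: A_def)
  have D0: "D \<noteq> 0" using nD mu nz by auto
  have A0: "A \<noteq> 0" using Apos by auto
  have "1 / A - 1 / D = (D - A) / (A * D)" using A0 D0 by (simp add: field_simps)
  then have "norm (1 / A - 1 / D) = norm (D - A) / (norm A * norm D)" by (simp add: norm_divide norm_mult)
  also have "\<dots> \<le> (M2 * norm z ^ 2) / ((\<mu> / 2 * norm z) * (\<mu> * norm z))"
  proof (rule frac_le)
    show "0 \<le> M2 * norm z ^ 2" using nDA norm_ge_zero order_trans by blast
    show "norm (D - A) \<le> M2 * norm z ^ 2" by (rule nDA)
    show "0 < \<mu> / 2 * norm z * (\<mu> * norm z)" using mu nz by simp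
    show "\<mu> / 2 * norm z * (\<mu> * norm z) \<le> norm A * norm D" unfolding nD[symmetric] by (rule mult_right_mono[OF nA]) simp
  qed
  also have "\<dots> = 2 * M2 / \<mu>\<^sup>2" using nz mu by (simp add: field_simps power2_eq_square)
  also have "\<dots> \<le> 2 * M2 / c0\<^sup>2"
  proof -
    have "0 \<le> M2" proof -
      have h: "0 \<le> M2 * norm z ^ 2" using nDA norm_ge_zero order_trans by blast
      then show ?thesis using nz by (simp add: zero_le_mult_iff)
    qed
    moreover have "c0\<^sup>2 \<le> \<mu>\<^sup>2" using c0 by (intro power_mono) auto
    ultimately show ?thesis using c0 by (intro divide_left_mono) auto
  qed
  finally show "norm (1 / (1 - P) - 1 / (- \<i> * complex_of_real \<mu> * z)) \<le> 2 * M2 / c0\<^sup>2"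
    by (simp add: A_def D_def)
qed

lemma K_large:
  fixes P z :: complex and \<mu> c0 r \<delta> :: real
  assumes c0: "0 < c0" "c0 \<le> \<mu>" and r: "0 < r" "r \<le> norm z"
    and d: "0 < \<delta>" "\<delta> \<le> norm (1 - P)"
  shows "P \<noteq> 1" "norm (1 / (1 - P) - 1 / (- \<i> * complex_of_real \<mu> * z)) \<le> 1 / \<delta> + 1 / (c0 * r)"
proof -
  show "P \<noteq> 1" using d by auto
  have mu: "0 < \<mu>" using c0 by linarith
  have "norm (1 / (1 - P) - 1 / (- \<i> * complex_of_real \<mu> * z)) \<le> norm (1 / (1 - P)) + norm (1 / (- \<i> * complex_of_real \<mu> * z))"
    by (rule norm_triangle_ineq4)
  also have "norm (1 / (1 - P)) \<le> 1 / \<delta>" using d by (simp add: norm_divide divide_simps)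
  also have "norm (1 / (- \<i> * complex_of_real \<mu> * z)) = 1 / (\<mu> * norm z)" using mu by (simp add: norm_divide norm_mult)
  also have "\<dots> \<le> 1 / (c0 * r)"
  proof (rule divide_left_mono)
    show "c0 * r \<le> \<mu> * norm z" using c0 r by (intro mult_mono) auto
    show "0 \<le> (1::real)" by simp
    show "0 < \<mu> * norm z * (c0 * r)" using c0 r mu by (intro mult_pos_pos) auto
  qed
  finally show "norm (1 / (1 - P) - 1 / (- \<i> * complex_of_real \<mu> * z)) \<le> 1 / \<delta> + 1 / (c0 * r)" by simp
qed


lemma mix_lower:
  fixes p Phi Psi :: "real measure" and l :: real and g :: "real \<Rightarrow> real"
  assumes pp: "prob_space p" "sets p = sets borel" and pPhi: "prob_space Phi" "sets Phi = sets borel"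
    and l: "0 \<le> l" "l \<le> 1"
    and mix: "\<forall>A\<in>sets borel. measure p A = (1 - l) * measure Phi A + l * measure Psi A"
    and gm: "g \<in> borel_measurable borel" and gb: "\<forall>x. 0 \<le> g x \<and> g x \<le> 2"
  shows "(1 - l) * (\<integral>x. g x \<partial>Phi) \<le> (\<integral>x. g x \<partial>p)"
proof -
  interpret P: prob_space p by (rule pp(1))
  interpret F: prob_space Phi by (rule pPhi(1))
  define N where "N = density Phi (\<lambda>_. ennreal (1 - l))"
  have sN: "sets N = sets p" using pp pPhi by (simp add: N_def)
  have spN: "space N = space p" using sets_eq_imp_space_eq[OF sN] .
  have NL: "N \<le> p"
    unfolding le_measure_iff
  proof (simp add: spN sN, intro le_funI)
    fix A
    show "emeasure N A \<le> emeasure p A"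
    proof (cases "A \<in> sets N")
      case True
      then have Ab: "A \<in> sets borel" "A \<in> sets Phi" using sN pp pPhi by auto
      have "emeasure N A = ennreal (1 - l) * emeasure Phi A"
        unfolding N_def by (rule emeasure_density_const[OF Ab(2)])
      also have "\<dots> = ennreal ((1 - l) * measure Phi A)"
        using l by (simp add: F.emeasure_eq_measure ennreal_mult)
      also have "\<dots> \<le> ennreal (measure p A)"
        using mix Ab l by (intro ennreal_leI) (auto intro!: mult_nonneg_nonneg)
      also have "\<dots> = emeasure p A" by (simp add: P.emeasure_eq_measure)
      finally show ?thesis .
    next
      case False
      then show ?thesis by (simp add: emeasure_notin_sets)
    qed
  qed
  have gmp: "g \<in> borel_measurable Phi" "g \<in> borel_measurable p"
    using gm measurable_cong_sets[OF pPhi(2) refl, of borel] measurable_cong_sets[OF pp(2) refl, of borel] by metis+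
  have gme: "(\<lambda>x. ennreal (g x)) \<in> borel_measurable Phi" using gmp(1) by measurable
  have iF: "integrable Phi g" by (rule F.integrable_const_bound[where B=2]) (use gb gmp in auto)
  have iP: "integrable p g" by (rule P.integrable_const_bound[where B=2]) (use gb gmp in auto)
  have "(\<integral>\<^sup>+x. ennreal (g x) \<partial>N) \<le> (\<integral>\<^sup>+x. ennreal (g x) \<partial>p)"
    by (rule nn_integral_mono_measure[OF sN NL])
  moreover have "(\<integral>\<^sup>+x. ennreal (g x) \<partial>N) = ennreal ((1 - l) * (\<integral>x. g x \<partial>Phi))"
  proof -
    have "(\<integral>\<^sup>+x. ennreal (g x) \<partial>N) = (\<integral>\<^sup>+x. ennreal (1 - l) * ennreal (g x) \<partial>Phi)"
      unfolding N_def by (rule nn_integral_density) (use gme in auto)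
    also have "\<dots> = ennreal (1 - l) * (\<integral>\<^sup>+x. ennreal (g x) \<partial>Phi)"
      by (rule nn_integral_cmult) (use gmp(1) in measurable)
    finally have "(\<integral>\<^sup>+x. ennreal (g x) \<partial>N) = ennreal (1 - l) * (\<integral>\<^sup>+x. ennreal (g x) \<partial>Phi)" .
    moreover have "(\<integral>\<^sup>+x. ennreal (g x) \<partial>Phi) = ennreal (\<integral>x. g x \<partial>Phi)"
      by (rule nn_integral_eq_integral[OF iF]) (use gb in auto)
    moreover have "0 \<le> (\<integral>x. g x \<partial>Phi)" using gb by (intro integral_nonneg_AE) auto
    ultimately show ?thesis using l by (simp add: ennreal_mult)
  qed
  moreover have "(\<integral>\<^sup>+x. ennreal (g x) \<partial>p) = ennreal (\<integral>x. g x \<partial>p)"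
    by (rule nn_integral_eq_integral[OF iP]) (use gb in auto)
  ultimately have "ennreal ((1 - l) * (\<integral>x. g x \<partial>Phi)) \<le> ennreal (\<integral>x. g x \<partial>p)" by simp
  moreover have "0 \<le> (\<integral>x. g x \<partial>p)" using gb by (intro integral_nonneg_AE) auto
  ultimately show ?thesis by (simp add: ennreal_le_iff)
qed

lemma dens_facts:
  fixes phi :: "real \<Rightarrow> real"
  assumes ps: "prob_space (density lborel (\<lambda>x. ennreal (phi x)))" and nn: "\<forall>x. 0 \<le> phi x"
    and m: "phi \<in> borel_measurable borel"
  shows "integrable lborel phi" "(\<integral>x. phi x \<partial>lborel) = 1"
proof -
  interpret prob_space "density lborel (\<lambda>x. ennreal (phi x))" by (rule ps)
  have "emeasure (density lborel (\<lambda>x. ennreal (phi x))) UNIV = 1"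
    using emeasure_space_1 by simp
  then have "(\<integral>\<^sup>+x. ennreal (phi x) \<partial>lborel) = ennreal 1"
    using m by (simp add: emeasure_density)
  then have "integrable lborel phi \<and> (\<integral>x. phi x \<partial>lborel) = 1"
    by (subst (asm) nn_integral_eq_integrable) (use m nn in auto)
  then show "integrable lborel phi" "(\<integral>x. phi x \<partial>lborel) = 1" by auto
qed

theorem lemma3p1:
  fixes \<M> :: "real measure set"
    and lam :: "real measure \<Rightarrow> real"
    and Phi Psi :: "real measure \<Rightarrow> real measure"
    and phi :: "real measure \<Rightarrow> real \<Rightarrow> real"
    and T :: real
  assumes prob: "\<forall>p\<in>\<M>. prob_space p \<and> sets p = sets borel"
    and mean_pos: "\<exists>c>0. \<forall>p\<in>\<M>. c \<le> mean p"
    and expmom: "\<exists>\<tau>>0. \<exists>B::real. \<forall>p\<in>\<M>.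
                   (\<integral>\<^sup>+ x. ennreal (exp (\<tau> * \<bar>x\<bar>)) \<partial>p) \<le> ennreal B"
    and lam_range: "\<forall>p\<in>\<M>. 0 \<le> lam p \<and> lam p < 1"
    and Phi_Psi_prob: "\<forall>p\<in>\<M>. prob_space (Phi p) \<and> sets (Phi p) = sets borel
                          \<and> prob_space (Psi p) \<and> sets (Psi p) = sets borel"
    and mixture: "\<forall>p\<in>\<M>. \<forall>A\<in>sets borel.
                    measure p A = (1 - lam p) * measure (Phi p) A + lam p * measure (Psi p) A"
    and density: "\<forall>p\<in>\<M>. (\<forall>x. 0 \<le> phi p x) \<and>
                    Phi p = density lborel (\<lambda>x. ennreal (phi p x))"
    and lam_sup: "\<exists>c<1. \<forall>p\<in>\<M>. lam p \<le> c"
    and T_pos: "0 < T"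
    and C2: "\<forall>p\<in>\<M>. (\<forall>x. phi p differentiable at x)
                 \<and> (\<forall>x. deriv (phi p) differentiable at x)
                 \<and> continuous_on UNIV (deriv (deriv (phi p)))"
    and supp: "\<forall>p\<in>\<M>. \<exists>a. 0 \<le> a \<and> a < T \<and> (\<forall>x. a < \<bar>x\<bar> \<longrightarrow> phi p x = 0)"
    and d2_bound: "\<exists>B. \<forall>p\<in>\<M>.
                     integral {-T..T} (\<lambda>x. \<bar>deriv (deriv (phi p)) x\<bar>) \<le> B"
  shows "\<exists>\<eta>>0. (\<forall>p\<in>\<M>. cfz p analytic_on strip \<eta>
                    \<and> (\<forall>z\<in>strip \<eta> - {0}. cfz p z \<noteq> 1))
              \<and> (\<exists>L. \<forall>p\<in>\<M>. \<forall>z\<in>strip \<eta> - {0}. norm (Kfun p z) \<le> L)"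
proof -
  obtain c0 where c0: "c0 > 0" "\<forall>p\<in>\<M>. c0 \<le> mean p" using mean_pos by blast
  obtain \<tau> B0 where tau: "\<tau> > 0" and B0: "\<forall>p\<in>\<M>. (\<integral>\<^sup>+ x. ennreal (exp (\<tau> * \<bar>x\<bar>)) \<partial>p) \<le> ennreal B0"
    using expmom by blast
  define B where "B = max B0 1"
  have B1: "1 \<le> B" by (simp add: B_def)
  have Bb: "\<forall>p\<in>\<M>. (\<integral>\<^sup>+ x. ennreal (exp (\<tau> * \<bar>x\<bar>)) \<partial>p) \<le> ennreal B"
  proof
    fix p assume "p \<in> \<M>"
    then have "(\<integral>\<^sup>+ x. ennreal (exp (\<tau> * \<bar>x\<bar>)) \<partial>p) \<le> ennreal B0" using B0 by blast
    also have "\<dots> \<le> ennreal B" by (intro ennreal_leI) (simp add: B_def)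
    finally show "(\<integral>\<^sup>+ x. ennreal (exp (\<tau> * \<bar>x\<bar>)) \<partial>p) \<le> ennreal B" .
  qed
  obtain c1 where c1: "c1 < 1" "\<forall>p\<in>\<M>. lam p \<le> c1" using lam_sup by blast
  obtain B2 where B2: "\<forall>p\<in>\<M>. integral {-T..T} (\<lambda>x. \<bar>deriv (deriv (phi p)) x\<bar>) \<le> B2"
    using d2_bound by blast
  define Mp where "Mp = 2 * T * max B2 0 + 1"
  have Mp0: "0 < Mp"
  proof -
    have "0 \<le> 2 * T * max B2 0" using T_pos by simp
    then show ?thesis unfolding Mp_def by linarith
  qed
  have phib: "phi p x \<le> Mp" if p: "p \<in> \<M>" for p x
  proof -
    obtain a where a: "0 \<le> a" "a < T" "\<forall>x. a < \<bar>x\<bar> \<longrightarrow> phi p x = 0" using supp p by blast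
    have b2: "integral {-T..T} (\<lambda>x. \<bar>deriv (deriv (phi p)) x\<bar>) \<le> max B2 0"
    proof -
      have "integral {-T..T} (\<lambda>x. \<bar>deriv (deriv (phi p)) x\<bar>) \<le> B2" using B2 p by blast
      moreover have "B2 \<le> max B2 0" by simp
      ultimately show ?thesis by linarith
    qed
    have "\<bar>phi p x\<bar> \<le> 2 * T * max B2 0"
      by (rule phi_bound[OF T_pos _ _ _ a b2]) (use C2 p in auto)
    then show "phi p x \<le> Mp" unfolding Mp_def by linarith
  qed
  define M2 where "M2 = 4 * B / \<tau>\<^sup>2"
  have M2: "0 < M2" using B1 tau by (simp add: M2_def)
  define r where "r = min (\<tau> / 2) (c0 / (2 * M2))"
  have r0: "0 < r" using tau c0 M2 by (simp add: r_def)
  define d' where "d' = (1 - cos (wc Mp T (r / 2))) / 2"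
  have d'0: "0 < d'" using wc_cos[OF Mp0 T_pos, of "r / 2"] r0 by (simp add: d'_def)
  define c1' where "c1' = max c1 0"
  have c1': "c1' < 1" "0 \<le> c1'" using c1 by (auto simp: c1'_def)
  define dR where "dR = (1 - c1') * d'"
  have dR0: "0 < dR" using c1' d'0 by (simp add: dR_def)
  define C where "C = 2 * B / \<tau>"
  have C0: "0 < C" using B1 tau by (simp add: C_def)
  define \<eta> where "\<eta> = min (r / 2) (min (\<tau> / 4) (dR / (2 * C)))"
  have \<eta>0: "0 < \<eta>" using r0 tau dR0 C0 by (simp add: \<eta>_def)
  define L where "L = max (2 * M2 / c0\<^sup>2) (1 / (dR / 2) + 1 / (c0 * r))"
  have main: "cfz p analytic_on strip \<eta> \<and> (\<forall>z\<in>strip \<eta> - {0}. cfz p z \<noteq> 1 \<and> norm (Kfun p z) \<le> L)"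
    if p: "p \<in> \<M>" for p
  proof -
    have pp: "prob_space p" "sets p = sets borel" using prob p by auto
    have momp: "mom p \<tau> B"
      by (rule mom.intro[OF pp(1) pp(2) tau _ Bb[rule_format, OF p]]) (use B1 in linarith)
    interpret mom p \<tau> B by (rule momp)
    have an: "cfz p analytic_on strip \<eta>"
      by (rule analytic[of \<eta> "\<tau> / 4"]) (use \<eta>0 tau in \<open>auto simp: \<eta>_def\<close>)
    have mu: "c0 \<le> mean p" using c0 p by auto
    have bnd: "cfz p z \<noteq> 1 \<and> norm (Kfun p z) \<le> L" if z: "z \<in> strip \<eta> - {0}" for z
    proof -
      have z0: "z \<noteq> 0" and iz: "\<bar>Im z\<bar> \<le> \<eta>" using z by (auto simp: strip_def)
      show ?thesis
      proof (cases "norm z \<le> r")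
        case True
        have zt: "norm z \<le> \<tau> / 2" using True by (simp add: r_def)
        have t: "norm (cfz p z - 1 - \<i> * complex_of_real (mean p) * z) \<le> M2 * norm z ^ 2"
          using taylor[OF zt] by (simp add: M2_def)
        have m: "M2 * norm z \<le> c0 / 2"
        proof -
          have "M2 * norm z \<le> M2 * r" using True M2 by (intro mult_left_mono) auto
          also have "\<dots> \<le> M2 * (c0 / (2 * M2))" using M2 by (intro mult_left_mono) (auto simp: r_def)
          also have "\<dots> = c0 / 2" using M2 by simp
          finally show ?thesis .
        qed
        note K = K_small[OF c0(1) mu z0 t m]
        have "norm (Kfun p z) \<le> 2 * M2 / c0\<^sup>2" using K(2) unfolding Kfun_def .
        also have "\<dots> \<le> L" by (simp add: L_def)
        finally show ?thesis using K(1) by simp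
      next
        case False
        have nz: "r \<le> norm z" using False by simp
        have ieta: "\<eta> \<le> r / 2" "\<eta> \<le> \<tau> / 4" "\<eta> \<le> dR / (2 * C)" by (simp_all add: \<eta>_def)
        have xre: "r / 2 \<le> \<bar>Re z\<bar>" using cmod_le[of z] nz iz ieta by linarith
        define x where "x = Re z"
        define g where "g t = 1 - cos (x * t)" for t
        have gm: "g \<in> borel_measurable borel" unfolding g_def by (intro borel_measurable_continuous_onI continuous_intros)
        have gb: "\<forall>t. 0 \<le> g t \<and> g t \<le> 2"
        proof
          fix t
          have "-1 \<le> cos (x * t)" "cos (x * t) \<le> 1" by simp_all
          then show "0 \<le> g t \<and> g t \<le> 2" unfolding g_def by linarith
        qed
        have PP: "prob_space (Phi p)" "sets (Phi p) = sets borel" using Phi_Psi_prob p by auto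
        have lr: "0 \<le> lam p" "lam p \<le> 1" using lam_range p by auto
        have mixp: "\<forall>A\<in>sets borel. measure p A = (1 - lam p) * measure (Phi p) A + lam p * measure (Psi p) A"
          using mixture p by auto
        have ml: "(1 - lam p) * (\<integral>t. g t \<partial>Phi p) \<le> (\<integral>t. g t \<partial>p)"
          by (rule mix_lower[OF pp PP lr mixp gm gb])
        have dp: "\<forall>t. 0 \<le> phi p t" "Phi p = density lborel (\<lambda>t. ennreal (phi p t))" using density p by auto
        have cont: "continuous_on UNIV (phi p)"
        proof (rule continuous_at_imp_continuous_on, intro ballI)
          fix y :: real
          have "phi p differentiable at y" using C2 p by blast
          then show "isCont (phi p) y" by (rule differentiable_imp_continuous_within)
        qed
        have phim: "phi p \<in> borel_measurable borel" by (rule borel_measurable_continuous_onI[OF cont])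
        note df = dens_facts[OF PP(1)[unfolded dp(2)] dp(1) phim]
        have sT: "\<forall>t. T < \<bar>t\<bar> \<longrightarrow> phi p t = 0"
        proof -
          obtain a where a: "0 \<le> a" "a < T" "\<forall>x. a < \<bar>x\<bar> \<longrightarrow> phi p x = 0" using supp p by blast
          then show ?thesis by auto
        qed
        have cv: "d' \<le> (\<integral>t. phi p t * (1 - cos (x * t)) \<partial>lborel)"
          unfolding d'_def
          by (rule cover[OF dp(1) _ Mp0 T_pos sT df(1) df(2)]) (use phib[OF p] r0 xre in \<open>auto simp: x_def\<close>)
        have iPhi: "(\<integral>t. g t \<partial>Phi p) = (\<integral>t. phi p t * (1 - cos (x * t)) \<partial>lborel)"
          unfolding dp(2) using gm phim dp(1) by (simp add: integral_density g_def)
        have "dR \<le> (1 - lam p) * d'"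
          unfolding dR_def using c1 p d'0 by (intro mult_right_mono) (auto simp: c1'_def)
        also have "\<dots> \<le> (1 - lam p) * (\<integral>t. g t \<partial>Phi p)" using cv iPhi lr by (intro mult_left_mono) auto
        also have "\<dots> \<le> (\<integral>t. g t \<partial>p)" by (rule ml)
        also have "\<dots> = Re (1 - cfz p (complex_of_real x))" unfolding g_def by (rule re_real[symmetric])
        finally have ReB: "dR \<le> Re (1 - cfz p (complex_of_real x))" .
        have sh: "norm (cfz p z - cfz p (complex_of_real x)) \<le> \<bar>Im z\<bar> * C"
          unfolding x_def C_def by (rule shift) (use iz ieta in auto)
        have "\<bar>Im z\<bar> * C \<le> dR / (2 * C) * C" using iz ieta C0 by (intro mult_right_mono) auto
        also have "\<dots> = dR / 2" using C0 by simp
        finally have sh2: "norm (cfz p z - cfz p (complex_of_real x)) \<le> dR / 2" using sh by linarith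
        have "Re (1 - cfz p (complex_of_real x)) \<le> norm (1 - cfz p (complex_of_real x))" by (rule complex_Re_le_cmod)
        also have "\<dots> \<le> norm (1 - cfz p z) + norm (cfz p z - cfz p (complex_of_real x))"
          using norm_triangle_ineq[of "1 - cfz p z" "cfz p z - cfz p (complex_of_real x)"] by simp
        finally have lb: "dR / 2 \<le> norm (1 - cfz p z)" using ReB sh2 by linarith
        have dR2: "0 < dR / 2" using dR0 by simp
        note K = K_large[OF c0(1) mu r0 nz dR2 lb]
        have "norm (Kfun p z) \<le> 1 / (dR / 2) + 1 / (c0 * r)" using K(2) unfolding Kfun_def .
        also have "\<dots> \<le> L" by (simp add: L_def)
        finally show ?thesis using K(1) by simp
      qed
    qed
    show ?thesis using an bnd by blast
  qed
  have A1: "\<forall>p\<in>\<M>. cfz p analytic_on strip \<eta> \<and> (\<forall>z\<in>strip \<eta> - {0}. cfz p z \<noteq> 1)"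
    using main by blast
  have A2: "\<forall>p\<in>\<M>. \<forall>z\<in>strip \<eta> - {0}. norm (Kfun p z) \<le> L"
    using main by blast
  show ?thesis using \<eta>0 A1 A2 by blast
qed


end
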